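(* Let $|\Psi_{in}\rangle=\frac1{\sqrt d}\sum_{i=1}^d|A_i\rangle|B_i\rangle$ with orthonormal sets $\{|A_i\rangle\}\subset\mathcal H_A$, $\{|B_i\rangle\}\subset\mathcal H_B$, and $|\Psi_{out}\rangle=\frac1{\sqrt d}\sum_{i=1}^d|a_i\rangle|b_i\rangle$ with orthonormal bases $\{|a_i\rangle\}$ of $\mathcal H_a$ and $\{|b_i\rangle\}$ of $\mathcal H_b$, $\dim\mathcal H_a=\dim\mathcal H_b=d$. Let $E_k:\mathcal H_A\to\mathcal H_a$ and $F_k:\mathcal H_B\to\mathcal H_b$ be linear operators with $\sum_k E_k^\dagger E_k\otimes F_k^\dagger F_k=\mathbb I_{AB}$ and $(E_k\otimes F_k)|\Psi_{in}\rangle=\sqrt{p_k}|\Psi_{out}\rangle$ for all $k$, where $p_k\ge0$. Then for every $k$ with $p_k\neq0$ there exist $\alpha_k>0$ and a $d\times d$ unitary matrix $U_k^M$ such that $E_k^M=\alpha_kU_k^M$ and $F_k^M=\frac{\sqrt{p_k}}{\alpha_k}\overline{U_k^M}$, where $(E_k^M)_{ij}=\langle a_i|E_k|A_j\rangle$, $(F_k^M)_{ij}=\langle b_i|F_k|B_j\rangle$ and the bar denotes entrywise complex conjugation.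
   Context: All Hilbert spaces are finite-dimensional; $\dim\mathcal H_A,\dim\mathcal H_B\ge d$. *)

theory Defs
  imports "Jordan_Normal_Form.Matrix" "Jordan_Normal_Form.Schur_Decomposition"
begin

text \<open>Finite-dimensional Hilbert spaces are modelled as coordinate spaces complex^n
  with the standard inner product; tensor products as Kronecker products.\<close>

definition braket :: "complex vec \<Rightarrow> complex vec \<Rightarrow> complex" where
  "braket u v = (\<Sum>i<dim_vec v. cnj (u $ i) * v $ i)"

definition orthonormal_family :: "nat \<Rightarrow> nat \<Rightarrow> (nat \<Rightarrow> complex vec) \<Rightarrow> bool" where
  "orthonormal_family n d v \<longleftrightarrow> (\<forall>i<d. v i \<in> carrier_vec n) \<and>
     (\<forall>i<d. \<forall>j<d. braket (v i) (v j) = (if i = j then 1 else 0))"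

definition kron_vec :: "complex vec \<Rightarrow> complex vec \<Rightarrow> complex vec" where
  "kron_vec u v = vec (dim_vec u * dim_vec v)
     (\<lambda>r. u $ (r div dim_vec v) * v $ (r mod dim_vec v))"

definition kron :: "complex mat \<Rightarrow> complex mat \<Rightarrow> complex mat" where
  "kron M N = mat (dim_row M * dim_row N) (dim_col M * dim_col N)
     (\<lambda>(r, c). M $$ (r div dim_row N, c div dim_col N) * N $$ (r mod dim_row N, c mod dim_col N))"

definition unitary_mat :: "nat \<Rightarrow> complex mat \<Rightarrow> bool" where
  "unitary_mat n U \<longleftrightarrow> U \<in> carrier_mat n n \<and>
     U * mat_adjoint U = 1\<^sub>m n \<and> mat_adjoint U * U = 1\<^sub>m n"

definition max_ent :: "nat \<Rightarrow> nat \<Rightarrow> nat \<Rightarrow> (nat \<Rightarrow> complex vec) \<Rightarrow> (nat \<Rightarrow> complex vec) \<Rightarrow> complex vec" where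
  "max_ent n m d v w = vec (n * m)
     (\<lambda>r. complex_of_real (1 / sqrt (real d)) * (\<Sum>i<d. kron_vec (v i) (w i) $ r))"

definition op_matrix :: "nat \<Rightarrow> (nat \<Rightarrow> complex vec) \<Rightarrow> complex mat \<Rightarrow> (nat \<Rightarrow> complex vec) \<Rightarrow> complex mat" where
  "op_matrix d out M inp = mat d d (\<lambda>(i, j). braket (out i) (M *\<^sub>v inp j))"

end

theory Submission
  imports Defs
begin

lemma sum_div_mod:
  fixes n m :: nat and f :: "nat \<Rightarrow> nat \<Rightarrow> 'b::comm_monoid_add"
  shows "(\<Sum>c<n*m. f (c div m) (c mod m)) = (\<Sum>a<n. \<Sum>b<m. f a b)"
proof -
  have lt: "a*m+b < n*m" if "a<n" "b<m" for a b
  proof -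
    have "a*m + b < a*m + m" using that by simp
    also have "\<dots> = (a+1)*m" by simp
    also have "\<dots> \<le> n*m" using that by (intro mult_right_mono) auto
    finally show ?thesis .
  qed
  have dm: "c div m < n \<and> c mod m < m" if "c < n*m" for c
  proof -
    have "m > 0" using that by (cases m) auto
    then show ?thesis using that by (auto simp: less_mult_imp_div_less)
  qed
  have "(\<Sum>a<n. \<Sum>b<m. f a b) = (\<Sum>(a,b)\<in>{..<n}\<times>{..<m}. f a b)"
    by (simp add: sum.cartesian_product)
  also have "\<dots> = (\<Sum>c<n*m. f (c div m) (c mod m))"
    apply (rule sum.reindex_bij_witness[where i="\<lambda>c. (c div m, c mod m)" and j="\<lambda>(a,b). a*m+b"])
    using lt dm by auto
  finally show ?thesis by simp
qed


lemma adj_dim[simp]: "dim_row (mat_adjoint A) = dim_col A" "dim_col (mat_adjoint A) = dim_row A"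
  unfolding mat_adjoint_def by simp_all

lemma adj_index[simp]: "i < dim_col A \<Longrightarrow> j < dim_row A \<Longrightarrow> mat_adjoint A $$ (i,j) = cnj (A $$ (j,i))"
  unfolding mat_adjoint_def by (simp add: mat_of_rows_index)

lemma adj_carrier: "A \<in> carrier_mat n m \<Longrightarrow> mat_adjoint A \<in> carrier_mat m n"
  unfolding carrier_mat_def by simp

lemma mult_vec_index: assumes A: "A \<in> carrier_mat n m" and v: "v \<in> carrier_vec m" and i: "i < n"
  shows "(A *\<^sub>v v) $ i = (\<Sum>c<m. A $$ (i,c) * v $ c)"
proof -
  have "(A *\<^sub>v v) $ i = row A i \<bullet> v" using A i by simp
  also have "\<dots> = (\<Sum>c\<in>{0..<m}. row A i $ c * v $ c)" using v unfolding scalar_prod_def by simp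
  also have "\<dots> = (\<Sum>c<m. A $$ (i,c) * v $ c)" 
    unfolding atLeast0LessThan using A i by (intro sum.cong) auto
  finally show ?thesis .
qed

lemma kron_vec_dim[simp]: "dim_vec (kron_vec u v) = dim_vec u * dim_vec v"
  by (simp add: kron_vec_def)

lemma kron_vec_carrier: "u \<in> carrier_vec n \<Longrightarrow> v \<in> carrier_vec m \<Longrightarrow> kron_vec u v \<in> carrier_vec (n*m)"
  unfolding carrier_vec_def by simp

lemma kron_carrier: "X \<in> carrier_mat p n \<Longrightarrow> Y \<in> carrier_mat q m \<Longrightarrow> kron X Y \<in> carrier_mat (p*q) (n*m)"
  unfolding carrier_mat_def kron_def by simp

lemma kron_mult_kron_vec:
  assumes X: "X \<in> carrier_mat p n" and Y: "Y \<in> carrier_mat q m"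
    and u: "u \<in> carrier_vec n" and v: "v \<in> carrier_vec m"
  shows "kron X Y *\<^sub>v kron_vec u v = kron_vec (X *\<^sub>v u) (Y *\<^sub>v v)"
proof (rule eq_vecI)
  show "dim_vec (kron X Y *\<^sub>v kron_vec u v) = dim_vec (kron_vec (X *\<^sub>v u) (Y *\<^sub>v v))"
    using X Y by (simp add: kron_def)
  fix r assume "r < dim_vec (kron_vec (X *\<^sub>v u) (Y *\<^sub>v v))"
  then have r: "r < p*q" using X Y by simp
  then have q: "q > 0" by (cases q) auto
  have r1: "r div q < p" using r by (simp add: less_mult_imp_div_less)
  have r2: "r mod q < q" using q by simp
  have "(kron X Y *\<^sub>v kron_vec u v) $ r = (\<Sum>c<n*m. kron X Y $$ (r,c) * kron_vec u v $ c)"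
    using mult_vec_index[OF kron_carrier[OF X Y] kron_vec_carrier[OF u v] r] .
  also have "\<dots> = (\<Sum>c<n*m. (X $$ (r div q, c div m) * u $ (c div m)) * (Y $$ (r mod q, c mod m) * v $ (c mod m)))"
  proof (rule sum.cong[OF refl])
    fix c assume c: "c \<in> {..<n*m}"
    then have "m > 0" by (cases m) auto
    then show "kron X Y $$ (r,c) * kron_vec u v $ c = (X $$ (r div q, c div m) * u $ (c div m)) * (Y $$ (r mod q, c mod m) * v $ (c mod m))"
      using X Y u v r c by (simp add: kron_def kron_vec_def)
  qed
  also have "\<dots> = (\<Sum>a<n. \<Sum>b<m. (X $$ (r div q, a) * u $ a) * (Y $$ (r mod q, b) * v $ b))"
    by (rule sum_div_mod)
  also have "\<dots> = (\<Sum>a<n. X $$ (r div q, a) * u $ a) * (\<Sum>b<m. Y $$ (r mod q, b) * v $ b)"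
    by (simp add: sum_product)
  also have "\<dots> = (X *\<^sub>v u) $ (r div q) * (Y *\<^sub>v v) $ (r mod q)"
    using mult_vec_index[OF X u r1] mult_vec_index[OF Y v r2] by simp
  also have "\<dots> = kron_vec (X *\<^sub>v u) (Y *\<^sub>v v) $ r"
    using X Y r by (simp add: kron_vec_def)
  finally show "(kron X Y *\<^sub>v kron_vec u v) $ r = kron_vec (X *\<^sub>v u) (Y *\<^sub>v v) $ r" .
qed

lemma braket_kron:
  assumes x: "x \<in> carrier_vec n" and u: "u \<in> carrier_vec n"
    and y: "y \<in> carrier_vec m" and v: "v \<in> carrier_vec m"
  shows "braket (kron_vec x y) (kron_vec u v) = braket x u * braket y v"
proof -
  have "braket (kron_vec x y) (kron_vec u v) = (\<Sum>c<n*m. (cnj (x $ (c div m)) * u $ (c div m)) * (cnj (y $ (c mod m)) * v $ (c mod m)))"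
    unfolding braket_def using x y u v by (intro sum.cong) (auto simp: kron_vec_def)
  also have "\<dots> = (\<Sum>a<n. \<Sum>b<m. (cnj (x $ a) * u $ a) * (cnj (y $ b) * v $ b))"
    by (rule sum_div_mod)
  also have "\<dots> = braket x u * braket y v"
    unfolding braket_def using u v by (simp add: sum_product)
  finally show ?thesis .
qed



lemma max_ent_index: "r < n*m \<Longrightarrow> max_ent n m d v w $ r = complex_of_real (1 / sqrt (real d)) * (\<Sum>i<d. kron_vec (v i) (w i) $ r)"
  unfolding max_ent_def by simp

lemma max_ent_dim[simp]: "dim_vec (max_ent n m d v w) = n*m"
  unfolding max_ent_def by simp

lemma kron_mult_max_ent:
  assumes X: "X \<in> carrier_mat p n" and Y: "Y \<in> carrier_mat q m"
    and v: "\<And>j. j<d \<Longrightarrow> v j \<in> carrier_vec n" and w: "\<And>j. j<d \<Longrightarrow> w j \<in> carrier_vec m"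
  shows "kron X Y *\<^sub>v max_ent n m d v w = max_ent p q d (\<lambda>j. X *\<^sub>v v j) (\<lambda>j. Y *\<^sub>v w j)"
proof (rule eq_vecI)
  show "dim_vec (kron X Y *\<^sub>v max_ent n m d v w) = dim_vec (max_ent p q d (\<lambda>j. X *\<^sub>v v j) (\<lambda>j. Y *\<^sub>v w j))"
    using kron_carrier[OF X Y] by simp
  fix r assume "r < dim_vec (max_ent p q d (\<lambda>j. X *\<^sub>v v j) (\<lambda>j. Y *\<^sub>v w j))"
  then have r: "r < p*q" by simp
  let ?s = "complex_of_real (1 / sqrt (real d))"
  have me: "max_ent n m d v w \<in> carrier_vec (n*m)" unfolding carrier_vec_def by simp
  have "(kron X Y *\<^sub>v max_ent n m d v w) $ r = (\<Sum>c<n*m. kron X Y $$ (r,c) * max_ent n m d v w $ c)"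
    by (rule mult_vec_index[OF kron_carrier[OF X Y] me r])
  also have "\<dots> = (\<Sum>c<n*m. kron X Y $$ (r,c) * (?s * (\<Sum>j<d. kron_vec (v j) (w j) $ c)))"
    by (intro sum.cong) (auto simp: max_ent_index)
  also have "\<dots> = ?s * (\<Sum>j<d. \<Sum>c<n*m. kron X Y $$ (r,c) * kron_vec (v j) (w j) $ c)"
    by (simp add: sum_distrib_left sum_distrib_right mult_ac sum.swap[of _ "{..<d}"])
  also have "\<dots> = ?s * (\<Sum>j<d. kron_vec (X *\<^sub>v v j) (Y *\<^sub>v w j) $ r)"
  proof -
    have "(\<Sum>c<n*m. kron X Y $$ (r,c) * kron_vec (v j) (w j) $ c) = kron_vec (X *\<^sub>v v j) (Y *\<^sub>v w j) $ r"
      if j: "j < d" for j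
      using mult_vec_index[OF kron_carrier[OF X Y] kron_vec_carrier[OF v[OF j] w[OF j]] r, symmetric]
        kron_mult_kron_vec[OF X Y v[OF j] w[OF j]] by simp
    then show ?thesis by simp
  qed
  also have "\<dots> = max_ent p q d (\<lambda>j. X *\<^sub>v v j) (\<lambda>j. Y *\<^sub>v w j) $ r"
    using r by (simp add: max_ent_index)
  finally show "(kron X Y *\<^sub>v max_ent n m d v w) $ r = max_ent p q d (\<lambda>j. X *\<^sub>v v j) (\<lambda>j. Y *\<^sub>v w j) $ r" .
qed

lemma braket_max_ent:
  assumes v: "\<And>j. j<d \<Longrightarrow> v j \<in> carrier_vec n" and w: "\<And>j. j<d \<Longrightarrow> w j \<in> carrier_vec m"
  shows "braket z (max_ent n m d v w) = complex_of_real (1 / sqrt (real d)) * (\<Sum>j<d. braket z (kron_vec (v j) (w j)))"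
proof -
  let ?s = "complex_of_real (1 / sqrt (real d))"
  have "braket z (max_ent n m d v w) = (\<Sum>r<n*m. cnj (z $ r) * (?s * (\<Sum>j<d. kron_vec (v j) (w j) $ r)))"
    unfolding braket_def by (intro sum.cong) (auto simp: max_ent_index)
  also have "\<dots> = ?s * (\<Sum>j<d. \<Sum>r<n*m. cnj (z $ r) * kron_vec (v j) (w j) $ r)"
    by (simp add: sum_distrib_left sum_distrib_right mult_ac sum.swap[of _ "{..<d}"])
  also have "\<dots> = ?s * (\<Sum>j<d. braket z (kron_vec (v j) (w j)))"
  proof -
    have "(\<Sum>r<n*m. cnj (z $ r) * kron_vec (v j) (w j) $ r) = braket z (kron_vec (v j) (w j))" if j: "j<d" for j
      using v[OF j] w[OF j] unfolding braket_def by simp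
    then show ?thesis by simp
  qed
  finally show ?thesis .
qed

lemma braket_smult: "braket x (c \<cdot>\<^sub>v y) = c * braket x y"
  unfolding braket_def by (simp add: sum_distrib_left mult_ac)

lemma braket_adjoint:
  assumes E: "E \<in> carrier_mat p n" and u: "u \<in> carrier_vec n" and w: "w \<in> carrier_vec p"
  shows "braket u (mat_adjoint E *\<^sub>v w) = braket (E *\<^sub>v u) w"
proof -
  have "braket u (mat_adjoint E *\<^sub>v w) = (\<Sum>i<n. cnj (u $ i) * (\<Sum>r<p. mat_adjoint E $$ (i,r) * w $ r))"
    unfolding braket_def using E mult_vec_index[OF adj_carrier[OF E] w]
    by (intro sum.cong) auto
  also have "\<dots> = (\<Sum>i<n. cnj (u $ i) * (\<Sum>r<p. cnj (E $$ (r,i)) * w $ r))"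
    using E by (intro sum.cong) auto
  also have "\<dots> = (\<Sum>r<p. cnj (\<Sum>i<n. E $$ (r,i) * u $ i) * w $ r)"
    by (simp add: sum_distrib_left sum_distrib_right mult_ac sum.swap[of _ "{..<p}"])
  also have "\<dots> = braket (E *\<^sub>v u) w"
    unfolding braket_def using E w mult_vec_index[OF E u] by (intro sum.cong) auto
  finally show ?thesis .
qed

lemma braket_sum_mat:
  assumes K: "finite K" and Kk: "\<And>k. k \<in> K \<Longrightarrow> G k \<in> carrier_mat N N"
    and x: "x \<in> carrier_vec N" and y: "y \<in> carrier_vec N"
  shows "braket x (mat N N (\<lambda>(r,c). \<Sum>k\<in>K. G k $$ (r,c)) *\<^sub>v y) = (\<Sum>k\<in>K. braket x (G k *\<^sub>v y))"
proof -
  have T: "mat N N (\<lambda>(r,c). \<Sum>k\<in>K. G k $$ (r,c)) \<in> carrier_mat N N" by simp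
  have "braket x (mat N N (\<lambda>(r,c). \<Sum>k\<in>K. G k $$ (r,c)) *\<^sub>v y) =
     (\<Sum>r<N. cnj (x $ r) * (\<Sum>c<N. (\<Sum>k\<in>K. G k $$ (r,c)) * y $ c))"
    unfolding braket_def using mult_vec_index[OF T y] by (intro sum.cong) auto
  also have "\<dots> = (\<Sum>k\<in>K. \<Sum>r<N. cnj (x $ r) * (\<Sum>c<N. G k $$ (r,c) * y $ c))"
    by (simp add: sum_distrib_left sum_distrib_right mult_ac sum.swap[of _ "K"])
  also have "\<dots> = (\<Sum>k\<in>K. braket x (G k *\<^sub>v y))"
  proof (rule sum.cong[OF refl])
    fix k assume k: "k \<in> K"
    show "(\<Sum>r<N. cnj (x $ r) * (\<Sum>c<N. G k $$ (r,c) * y $ c)) = braket x (G k *\<^sub>v y)"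
      unfolding braket_def using Kk[OF k] mult_vec_index[OF Kk[OF k] y] by (intro sum.cong) auto
  qed
  finally show ?thesis .
qed

lemma braket_carrier: "v \<in> carrier_vec n \<Longrightarrow> braket u v = (\<Sum>r<n. cnj (u $ r) * v $ r)"
  unfolding braket_def carrier_vec_def by simp

lemma parseval:
  assumes a: "orthonormal_family d d a" and z: "z \<in> carrier_vec d" and z': "z' \<in> carrier_vec d"
  shows "braket z z' = (\<Sum>i<d. cnj (braket (a i) z) * braket (a i) z')"
proof -
  define Am where "Am = mat d d (\<lambda>(r,i). a i $ r)"
  have Am: "Am \<in> carrier_mat d d" unfolding Am_def by simp
  have ac: "a i \<in> carrier_vec d" if "i<d" for i using a that unfolding orthonormal_family_def by auto
  have "mat_adjoint Am * Am = 1\<^sub>m d"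
  proof (rule eq_matI)
    fix i j assume i: "i < dim_row (1\<^sub>m d)" and j: "j < dim_col (1\<^sub>m d)"
    have "(mat_adjoint Am * Am) $$ (i,j) = row (mat_adjoint Am) i \<bullet> col Am j" using Am i j by simp
    also have "\<dots> = (\<Sum>r\<in>{0..<d}. row (mat_adjoint Am) i $ r * col Am j $ r)"
      unfolding scalar_prod_def using Am by simp
    also have "\<dots> = (\<Sum>r<d. cnj (a i $ r) * a j $ r)"
      unfolding atLeast0LessThan using Am i j by (intro sum.cong) (auto simp: Am_def)
    also have "\<dots> = braket (a i) (a j)"
      using braket_carrier[OF ac, of j "a i"] j by simp
    also have "\<dots> = 1\<^sub>m d $$ (i,j)" using a i j unfolding orthonormal_family_def by simp
    finally show "(mat_adjoint Am * Am) $$ (i,j) = 1\<^sub>m d $$ (i,j)" .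
  qed (use Am in auto)
  then have AA: "Am * mat_adjoint Am = 1\<^sub>m d"
    by (rule mat_mult_left_right_inverse[OF adj_carrier[OF Am] Am])
  have del: "(\<Sum>i<d. a i $ r * cnj (a i $ s)) = (if r = s then 1 else 0)" if r: "r<d" and s: "s<d" for r s
  proof -
    have "(Am * mat_adjoint Am) $$ (r,s) = row Am r \<bullet> col (mat_adjoint Am) s" using Am r s by simp
    also have "\<dots> = (\<Sum>i\<in>{0..<d}. row Am r $ i * col (mat_adjoint Am) s $ i)"
      unfolding scalar_prod_def using Am by simp
    also have "\<dots> = (\<Sum>i<d. a i $ r * cnj (a i $ s))"
      unfolding atLeast0LessThan using Am r s by (intro sum.cong) (auto simp: Am_def)
    finally show ?thesis using AA r s by simp
  qed
  have "(\<Sum>i<d. cnj (braket (a i) z) * braket (a i) z') =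
      (\<Sum>i<d. (\<Sum>r<d. a i $ r * cnj (z $ r)) * (\<Sum>s<d. cnj (a i $ s) * z' $ s))"
    unfolding braket_def using z z' ac by (intro sum.cong) auto
  also have "\<dots> = (\<Sum>i<d. \<Sum>r<d. \<Sum>s<d. (a i $ r * cnj (z $ r)) * (cnj (a i $ s) * z' $ s))"
    by (simp add: sum_product)
  also have "\<dots> = (\<Sum>r<d. \<Sum>i<d. \<Sum>s<d. (a i $ r * cnj (z $ r)) * (cnj (a i $ s) * z' $ s))"
    by (rule sum.swap)
  also have "\<dots> = (\<Sum>r<d. \<Sum>s<d. \<Sum>i<d. (a i $ r * cnj (z $ r)) * (cnj (a i $ s) * z' $ s))"
    by (intro sum.cong refl sum.swap)
  also have "\<dots> = (\<Sum>r<d. \<Sum>s<d. cnj (z $ r) * z' $ s * (\<Sum>i<d. a i $ r * cnj (a i $ s)))"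
    by (intro sum.cong refl) (simp add: sum_distrib_left mult_ac)
  also have "\<dots> = (\<Sum>r<d. \<Sum>s<d. cnj (z $ r) * z' $ s * (if r = s then 1 else 0))"
    by (intro sum.cong refl) (simp add: del)
  also have "\<dots> = braket z z'"
    unfolding braket_def using z' by (simp add: if_distrib cong: if_cong)
  finally show ?thesis by simp
qed



lemma cmod_diff_sq:
  "(cmod (w - complex_of_real c * u))^2 = (cmod w)^2 - 2*c*Re(cnj w * u) + c^2 * (cmod u)^2"
  unfolding cmod_power2 by (simp add: power2_eq_square algebra_simps)

lemma quad_swap:
  fixes f g :: "nat \<Rightarrow> nat \<Rightarrow> complex"
  shows "(\<Sum>j<d. \<Sum>j'<d. (\<Sum>i<d. cnj (f i j) * f i j') * (\<Sum>m<d. cnj (g m j) * g m j')) =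
    (\<Sum>i<d. \<Sum>m<d. cnj (\<Sum>j<d. f i j * g m j) * (\<Sum>j'<d. f i j' * g m j'))"
proof -
  have "(\<Sum>j<d. \<Sum>j'<d. (\<Sum>i<d. cnj (f i j) * f i j') * (\<Sum>m<d. cnj (g m j) * g m j')) =
     (\<Sum>j<d. \<Sum>j'<d. \<Sum>i<d. \<Sum>m<d. (cnj (f i j) * f i j') * (cnj (g m j) * g m j'))"
    by (simp add: sum_product)
  also have "\<dots> = (\<Sum>j<d. \<Sum>i<d. \<Sum>j'<d. \<Sum>m<d. (cnj (f i j) * f i j') * (cnj (g m j) * g m j'))"
    by (intro sum.cong refl sum.swap)
  also have "\<dots> = (\<Sum>j<d. \<Sum>i<d. \<Sum>m<d. \<Sum>j'<d. (cnj (f i j) * f i j') * (cnj (g m j) * g m j'))"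
    by (intro sum.cong refl sum.swap)
  also have "\<dots> = (\<Sum>i<d. \<Sum>j<d. \<Sum>m<d. \<Sum>j'<d. (cnj (f i j) * f i j') * (cnj (g m j) * g m j'))"
    by (rule sum.swap)
  also have "\<dots> = (\<Sum>i<d. \<Sum>m<d. \<Sum>j<d. \<Sum>j'<d. (cnj (f i j) * f i j') * (cnj (g m j) * g m j'))"
    by (intro sum.cong refl sum.swap)
  also have "\<dots> = (\<Sum>i<d. \<Sum>m<d. \<Sum>j<d. \<Sum>j'<d. (cnj (f i j * g m j)) * (f i j' * g m j'))"
    by (intro sum.cong refl) (simp add: mult_ac)
  also have "\<dots> = (\<Sum>i<d. \<Sum>m<d. cnj (\<Sum>j<d. f i j * g m j) * (\<Sum>j'<d. f i j' * g m j'))"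
    by (simp add: sum_product)
  finally show ?thesis .
qed



lemma mat_mult_idx:
  assumes A: "A \<in> carrier_mat n m" and B: "B \<in> carrier_mat m q" and i: "i < n" and j: "j < q"
  shows "(A * B) $$ (i,j) = (\<Sum>r<m. A $$ (i,r) * B $$ (r,j))"
proof -
  have "(A * B) $$ (i,j) = row A i \<bullet> col B j" using A B i j by simp
  also have "\<dots> = (\<Sum>r\<in>{0..<m}. row A i $ r * col B j $ r)" using B unfolding scalar_prod_def by simp
  also have "\<dots> = (\<Sum>r<m. A $$ (i,r) * B $$ (r,j))"
    unfolding atLeast0LessThan using A B i j by (intro sum.cong) auto
  finally show ?thesis .
qed

lemma gram:
  assumes E: "E \<in> carrier_mat d n" and u: "u \<in> carrier_vec n" and u': "u' \<in> carrier_vec n"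
    and a: "orthonormal_family d d a"
  shows "braket u ((mat_adjoint E * E) *\<^sub>v u') = (\<Sum>i<d. cnj (braket (a i) (E *\<^sub>v u)) * braket (a i) (E *\<^sub>v u'))"
proof -
  have "braket u ((mat_adjoint E * E) *\<^sub>v u') = braket u (mat_adjoint E *\<^sub>v (E *\<^sub>v u'))"
    using E u' by (subst assoc_mult_mat_vec[OF adj_carrier[OF E] E u']) simp
  also have "\<dots> = braket (E *\<^sub>v u) (E *\<^sub>v u')"
    by (rule braket_adjoint[OF E u]) (use E u' in simp)
  also have "\<dots> = (\<Sum>i<d. cnj (braket (a i) (E *\<^sub>v u)) * braket (a i) (E *\<^sub>v u'))"
    by (rule parseval[OF a]) (use E u u' in simp)+
  finally show ?thesis .
qed

lemma main_aux:
  fixes nA nB d :: nat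
    and A B a b :: "nat \<Rightarrow> complex vec"
    and K :: "'k set"
    and E F :: "'k \<Rightarrow> complex mat"
    and p :: "'k \<Rightarrow> real"
  assumes "nA \<ge> d" and "nB \<ge> d"
    and oA: "orthonormal_family nA d A" and oB: "orthonormal_family nB d B"
    and oa: "orthonormal_family d d a" and ob: "orthonormal_family d d b"
    and fin: "finite K"
    and Ec: "\<And>k. k \<in> K \<Longrightarrow> E k \<in> carrier_mat d nA"
    and Fc: "\<And>k. k \<in> K \<Longrightarrow> F k \<in> carrier_mat d nB"
    and pnn: "\<And>k. k \<in> K \<Longrightarrow> p k \<ge> 0"
    and compl: "mat (nA * nB) (nA * nB) (\<lambda>(r, c). \<Sum>k\<in>K.
            kron (mat_adjoint (E k) * E k) (mat_adjoint (F k) * F k) $$ (r, c)) = 1\<^sub>m (nA * nB)"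
    and proj: "\<And>k. k \<in> K \<Longrightarrow> kron (E k) (F k) *\<^sub>v max_ent nA nB d A B
            = complex_of_real (sqrt (p k)) \<cdot>\<^sub>v max_ent d d d a b"
  shows "\<forall>k\<in>K. p k \<noteq> 0 \<longrightarrow> (\<exists>\<alpha>::real. \<alpha> > 0 \<and> (\<exists>U. unitary_mat d U \<and>
            op_matrix d a (E k) A = complex_of_real \<alpha> \<cdot>\<^sub>m U \<and>
            op_matrix d b (F k) B = complex_of_real (sqrt (p k) / \<alpha>) \<cdot>\<^sub>m map_mat cnj U))"
proof (cases "d = 0")
  case True
  show ?thesis
  proof (intro ballI impI exI conjI)
    show "(1::real) > 0" by simp
    show "unitary_mat d (1\<^sub>m d)" using True unfolding unitary_mat_def by (auto intro!: eq_matI)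
    fix k
    show "op_matrix d a (E k) A = complex_of_real 1 \<cdot>\<^sub>m 1\<^sub>m d" using True
      unfolding op_matrix_def by (auto intro!: eq_matI)
    show "op_matrix d b (F k) B = complex_of_real (sqrt (p k) / 1) \<cdot>\<^sub>m map_mat cnj (1\<^sub>m d)" using True
      unfolding op_matrix_def by (auto intro!: eq_matI)
  qed
next
  case False
  then have d0: "d > 0" by simp
  have Ac: "\<And>j. j<d \<Longrightarrow> A j \<in> carrier_vec nA" using oA unfolding orthonormal_family_def by auto
  have Bc: "\<And>j. j<d \<Longrightarrow> B j \<in> carrier_vec nB" using oB unfolding orthonormal_family_def by auto
  have ac: "\<And>j. j<d \<Longrightarrow> a j \<in> carrier_vec d" using oa unfolding orthonormal_family_def by auto
  have bc: "\<And>j. j<d \<Longrightarrow> b j \<in> carrier_vec d" using ob unfolding orthonormal_family_def by auto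
  have Ao: "\<And>i j. i<d \<Longrightarrow> j<d \<Longrightarrow> braket (A i) (A j) = (if i = j then 1 else 0)"
    using oA unfolding orthonormal_family_def by auto
  have Bo: "\<And>i j. i<d \<Longrightarrow> j<d \<Longrightarrow> braket (B i) (B j) = (if i = j then 1 else 0)"
    using oB unfolding orthonormal_family_def by auto
  have ao: "\<And>i j. i<d \<Longrightarrow> j<d \<Longrightarrow> braket (a i) (a j) = (if i = j then 1 else 0)"
    using oa unfolding orthonormal_family_def by auto
  have bo: "\<And>i j. i<d \<Longrightarrow> j<d \<Longrightarrow> braket (b i) (b j) = (if i = j then 1 else 0)"
    using ob unfolding orthonormal_family_def by auto
  define m where "m k i j = braket (a i) (E k *\<^sub>v A j)" for k i j
  define n where "n k i j = braket (b i) (F k *\<^sub>v B j)" for k i j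
  let ?s = "complex_of_real (1 / sqrt (real d))"
  have s0: "?s \<noteq> 0" using d0 by simp
  have delta: "(\<Sum>j<d. (if i = j then 1 else 0) * (if l = j then 1 else 0)) = (if i = l then 1 else (0::complex))"
    if "i<d" for i l using that by (simp add: if_distrib cong: if_cong)
  have factA: "(\<Sum>j<d. m k i j * n k l j) = complex_of_real (sqrt (p k)) * (if i = l then 1 else 0)"
    if k: "k \<in> K" and i: "i<d" and l: "l<d" for k i l
  proof -
    have EA: "E k *\<^sub>v A j \<in> carrier_vec d" if "j<d" for j using Ec[OF k] Ac[OF that] by simp
    have FB: "F k *\<^sub>v B j \<in> carrier_vec d" if "j<d" for j using Fc[OF k] Bc[OF that] by simp
    have "braket (kron_vec (a i) (b l)) (kron (E k) (F k) *\<^sub>v max_ent nA nB d A B) = ?s * (\<Sum>j<d. m k i j * n k l j)"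
    proof -
      have "kron (E k) (F k) *\<^sub>v max_ent nA nB d A B = max_ent d d d (\<lambda>j. E k *\<^sub>v A j) (\<lambda>j. F k *\<^sub>v B j)"
        by (rule kron_mult_max_ent[OF Ec[OF k] Fc[OF k] Ac Bc])
      then have "braket (kron_vec (a i) (b l)) (kron (E k) (F k) *\<^sub>v max_ent nA nB d A B)
         = ?s * (\<Sum>j<d. braket (kron_vec (a i) (b l)) (kron_vec (E k *\<^sub>v A j) (F k *\<^sub>v B j)))"
        using braket_max_ent[where v="\<lambda>j. E k *\<^sub>v A j" and w="\<lambda>j. F k *\<^sub>v B j", OF EA FB] by simp
      also have "\<dots> = ?s * (\<Sum>j<d. m k i j * n k l j)"
        using braket_kron[OF ac[OF i] EA bc[OF l] FB] by (simp add: m_def n_def)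
      finally show ?thesis .
    qed
    moreover have "braket (kron_vec (a i) (b l)) (complex_of_real (sqrt (p k)) \<cdot>\<^sub>v max_ent d d d a b)
        = complex_of_real (sqrt (p k)) * (?s * (if i = l then 1 else 0))"
    proof -
      have "braket (kron_vec (a i) (b l)) (max_ent d d d a b) = ?s * (\<Sum>j<d. braket (kron_vec (a i) (b l)) (kron_vec (a j) (b j)))"
        by (rule braket_max_ent[OF ac bc])
      also have "\<dots> = ?s * (\<Sum>j<d. (if i = j then 1 else 0) * (if l = j then 1 else 0))"
        using braket_kron[OF ac[OF i] ac bc[OF l] bc] ao[OF i] bo[OF l] by simp
      also have "\<dots> = ?s * (if i = l then 1 else 0)" using delta[OF i, of l] by simp
      finally show ?thesis unfolding braket_smult by simp
    qed
    ultimately show ?thesis using proj[OF k] s0 by (simp add: mult.left_commute)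
  qed
  have factC: "(\<Sum>k\<in>K. (\<Sum>i<d. cnj (m k i j) * m k i j') * (\<Sum>i<d. cnj (n k i l) * n k i l'))
      = (if j = j' then 1 else 0) * (if l = l' then 1 else 0)"
    if j: "j<d" and j': "j'<d" and l: "l<d" and l': "l'<d" for j j' l l'
  proof -
    define x where "x = kron_vec (A j) (B l)"
    define x' where "x' = kron_vec (A j') (B l')"
    have xc: "x \<in> carrier_vec (nA*nB)" unfolding x_def by (rule kron_vec_carrier[OF Ac[OF j] Bc[OF l]])
    have x'c: "x' \<in> carrier_vec (nA*nB)" unfolding x'_def by (rule kron_vec_carrier[OF Ac[OF j'] Bc[OF l']])
    define G where "G k = kron (mat_adjoint (E k) * E k) (mat_adjoint (F k) * F k)" for k
    have EE: "mat_adjoint (E k) * E k \<in> carrier_mat nA nA" if "k \<in> K" for k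
      using Ec[OF that] by (metis adj_carrier mult_carrier_mat)
    have FF: "mat_adjoint (F k) * F k \<in> carrier_mat nB nB" if "k \<in> K" for k
      using Fc[OF that] by (metis adj_carrier mult_carrier_mat)
    have Gc: "G k \<in> carrier_mat (nA*nB) (nA*nB)" if "k \<in> K" for k
      unfolding G_def by (rule kron_carrier[OF EE[OF that] FF[OF that]])
    have "braket x x' = (if j = j' then 1 else 0) * (if l = l' then 1 else 0)"
      unfolding x_def x'_def using braket_kron[OF Ac[OF j] Ac[OF j'] Bc[OF l] Bc[OF l']] Ao[OF j j'] Bo[OF l l'] by simp
    moreover have "braket x x' = braket x (1\<^sub>m (nA*nB) *\<^sub>v x')" using x'c by simp
    moreover have "braket x (1\<^sub>m (nA*nB) *\<^sub>v x') = (\<Sum>k\<in>K. braket x (G k *\<^sub>v x'))"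
    proof -
      have "braket x (1\<^sub>m (nA*nB) *\<^sub>v x') = braket x (mat (nA*nB) (nA*nB) (\<lambda>(r,c). \<Sum>k\<in>K. G k $$ (r,c)) *\<^sub>v x')"
        unfolding G_def compl ..
      also have "\<dots> = (\<Sum>k\<in>K. braket x (G k *\<^sub>v x'))"
        by (rule braket_sum_mat[where G=G, OF fin Gc xc x'c])
      finally show ?thesis .
    qed
    moreover have "braket x (G k *\<^sub>v x') = (\<Sum>i<d. cnj (m k i j) * m k i j') * (\<Sum>i<d. cnj (n k i l) * n k i l')"
      if k: "k \<in> K" for k
    proof -
      have "braket x (G k *\<^sub>v x') = braket (A j) ((mat_adjoint (E k) * E k) *\<^sub>v A j') * braket (B l) ((mat_adjoint (F k) * F k) *\<^sub>v B l')"
        unfolding G_def x_def x'_def kron_mult_kron_vec[OF EE[OF k] FF[OF k] Ac[OF j'] Bc[OF l']]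
        by (rule braket_kron[OF Ac[OF j] _ Bc[OF l]]) (use EE[OF k] FF[OF k] Ac[OF j'] Bc[OF l'] in simp)+
      also have "\<dots> = (\<Sum>i<d. cnj (m k i j) * m k i j') * (\<Sum>i<d. cnj (n k i l) * n k i l')"
        unfolding gram[OF Ec[OF k] Ac[OF j] Ac[OF j'] oa] gram[OF Fc[OF k] Bc[OF l] Bc[OF l'] ob] m_def n_def ..
      finally show ?thesis .
    qed
    ultimately show ?thesis by simp
  qed
  have perk: "(\<Sum>j<d. \<Sum>j'<d. (\<Sum>i<d. cnj (m k i j) * m k i j') * (\<Sum>i<d. cnj (n k i j) * n k i j'))
      = complex_of_real (p k * d)" if k: "k \<in> K" for k
  proof -
    have "(\<Sum>j<d. \<Sum>j'<d. (\<Sum>i<d. cnj (m k i j) * m k i j') * (\<Sum>i<d. cnj (n k i j) * n k i j'))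
       = (\<Sum>i<d. \<Sum>i2<d. cnj (\<Sum>j<d. m k i j * n k i2 j) * (\<Sum>j'<d. m k i j' * n k i2 j'))"
      by (rule quad_swap)
    also have "\<dots> = (\<Sum>i<d. \<Sum>i2<d. cnj (complex_of_real (sqrt (p k)) * (if i = i2 then 1 else 0)) * (complex_of_real (sqrt (p k)) * (if i = i2 then 1 else 0)))"
      by (intro sum.cong refl) (simp add: factA[OF k])
    also have "\<dots> = (\<Sum>i<d. \<Sum>i2<d. (if i = i2 then complex_of_real (p k) else 0))"
    proof (intro sum.cong refl)
      fix i i2
      have "cnj (complex_of_real (sqrt (p k))) * complex_of_real (sqrt (p k)) = complex_of_real (p k)"
        using pnn[OF k] by (simp flip: of_real_mult)
      then show "cnj (complex_of_real (sqrt (p k)) * (if i = i2 then 1 else 0)) * (complex_of_real (sqrt (p k)) * (if i = i2 then 1 else 0))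
        = (if i = i2 then complex_of_real (p k) else 0)" by simp
    qed
    also have "\<dots> = complex_of_real (p k * d)" by simp
    finally show ?thesis .
  qed
  have "(\<Sum>j<d. \<Sum>j'<d. \<Sum>k\<in>K. (\<Sum>i<d. cnj (m k i j) * m k i j') * (\<Sum>i<d. cnj (n k i j) * n k i j'))
      = (\<Sum>j<d. \<Sum>j'<d. (if j = j' then 1 else 0) * (if j = j' then 1 else (0::complex)))"
    by (intro sum.cong refl) (simp add: factC)
  also have "\<dots> = (\<Sum>j<d. (1::complex))"
  proof (intro sum.cong refl)
    fix j assume "j \<in> {..<d}"
    then show "(\<Sum>j'<d. (if j = j' then 1 else 0) * (if j = j' then 1 else (0::complex))) = 1"
      by (simp add: if_distrib[where f="\<lambda>x. x * _"] sum.delta cong: if_cong)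
  qed
  also have "\<dots> = of_nat d" by simp
  finally have "(\<Sum>k\<in>K. \<Sum>j<d. \<Sum>j'<d. (\<Sum>i<d. cnj (m k i j) * m k i j') * (\<Sum>i<d. cnj (n k i j) * n k i j')) = of_nat d"
    by (simp add: sum.swap[of _ K])
  then have "(\<Sum>k\<in>K. complex_of_real (p k * d)) = of_nat d" by (simp add: perk)
  then have "complex_of_real ((\<Sum>k\<in>K. p k) * d) = complex_of_real (real d)"
    by (simp add: sum_distrib_right)
  then have "(\<Sum>k\<in>K. p k) * d = real d" using of_real_eq_iff by blast
  then have sumP: "(\<Sum>k\<in>K. p k) = 1" using d0 by simp
  define SM where "SM k = (\<Sum>j<d. \<Sum>i<d. (cmod (m k i j))^2)" for k
  define SN where "SN k = (\<Sum>j<d. \<Sum>i<d. (cmod (n k i j))^2)" for k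
  have perk2: "(\<Sum>j<d. \<Sum>l<d. (\<Sum>i<d. cnj (m k i j) * m k i j) * (\<Sum>i<d. cnj (n k i l) * n k i l))
      = complex_of_real (SM k * SN k)" for k
  proof -
    have cs: "cnj z * z = complex_of_real ((cmod z)^2)" for z
      using complex_norm_square[of z] by (simp add: mult.commute)
    show ?thesis unfolding SM_def SN_def
      by (simp add: sum_product[symmetric] cs)
  qed
  have "(\<Sum>j<d. \<Sum>l<d. \<Sum>k\<in>K. (\<Sum>i<d. cnj (m k i j) * m k i j) * (\<Sum>i<d. cnj (n k i l) * n k i l))
      = (\<Sum>j<d. \<Sum>l<d. (1::complex))"
    by (intro sum.cong refl) (simp add: factC)
  then have "(\<Sum>k\<in>K. \<Sum>j<d. \<Sum>l<d. (\<Sum>i<d. cnj (m k i j) * m k i j) * (\<Sum>i<d. cnj (n k i l) * n k i l)) = of_nat (d*d)"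
    by (simp add: sum.swap[of _ K])
  then have "complex_of_real (\<Sum>k\<in>K. SM k * SN k) = complex_of_real (real d * real d)"
    by (simp add: perk2)
  then have sumD: "(\<Sum>k\<in>K. SM k * SN k) = real d * real d" using of_real_eq_iff by blast
  define t where "t k = sqrt (p k) * real d" for k
  have tnn: "t k \<ge> 0" if "k \<in> K" for k using pnn[OF that] unfolding t_def by simp
  have tsq: "(t k)^2 = p k * (real d * real d)" if "k \<in> K" for k
    using pnn[OF that] unfolding t_def by (simp add: power_mult_distrib power2_eq_square)
  have SMnn: "SM k \<ge> 0" for k unfolding SM_def by (intro sum_nonneg) auto
  have SNnn: "SN k \<ge> 0" for k unfolding SN_def by (intro sum_nonneg) auto
  have TT: "(\<Sum>j<d. \<Sum>i<d. n k i j * m k i j) = complex_of_real (t k)" if k: "k \<in> K" for k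
  proof -
    have "(\<Sum>j<d. \<Sum>i<d. n k i j * m k i j) = (\<Sum>i<d. \<Sum>j<d. m k i j * n k i j)"
      by (subst sum.swap) (simp add: mult.commute)
    also have "\<dots> = (\<Sum>i<d. complex_of_real (sqrt (p k)))"
      by (intro sum.cong refl) (simp add: factA[OF k])
    also have "\<dots> = complex_of_real (t k)" unfolding t_def by simp
    finally show ?thesis .
  qed
  define Q where "Q k c = (\<Sum>j<d. \<Sum>i<d. (cmod (cnj (n k i j) - complex_of_real c * m k i j))^2)" for k c
  have Qnn: "Q k c \<ge> 0" for k c unfolding Q_def by (intro sum_nonneg) auto
  have Qeq: "Q k c = SN k - 2 * c * t k + c^2 * SM k" if k: "k \<in> K" for k c
  proof -
    have "Q k c = (\<Sum>j<d. \<Sum>i<d. (cmod (n k i j))^2 - 2*c*Re(n k i j * m k i j) + c^2 * (cmod (m k i j))^2)"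
      unfolding Q_def cmod_diff_sq by simp
    also have "\<dots> = SN k - 2 * c * Re (\<Sum>j<d. \<Sum>i<d. n k i j * m k i j) + c^2 * SM k"
    proof -
      have e1: "(\<Sum>j<d. \<Sum>i<d. 2*c*Re(n k i j * m k i j)) = 2 * c * Re (\<Sum>j<d. \<Sum>i<d. n k i j * m k i j)"
        by (simp only: Re_sum sum_distrib_left)
      have e2: "(\<Sum>j<d. \<Sum>i<d. c^2 * (cmod (m k i j))^2) = c^2 * SM k"
        unfolding SM_def by (simp only: sum_distrib_left)
      show ?thesis unfolding SN_def e1[symmetric] e2[symmetric]
        by (simp only: sum.distrib sum_subtractf)
    qed
    also have "\<dots> = SN k - 2 * c * t k + c^2 * SM k" using TT[OF k] by simp
    finally show ?thesis .
  qed
  have SM0: "t k = 0" if k: "k \<in> K" and s: "SM k = 0" for k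
  proof (rule ccontr)
    assume "t k \<noteq> 0"
    then have tp: "t k > 0" using tnn[OF k] by simp
    have "0 \<le> Q k ((SN k + 1) / (2 * t k))" by (rule Qnn)
    also have "\<dots> = SN k - (SN k + 1)" unfolding Qeq[OF k] s using tp by (simp add: field_simps)
    finally show False by simp
  qed
  have CS: "SM k * SN k \<ge> p k * (real d * real d)" if k: "k \<in> K" for k
  proof (cases "SM k = 0")
    case True
    then have "t k = 0" using SM0[OF k] by simp
    then have "p k * (real d * real d) = 0" using tsq[OF k] by simp
    then show ?thesis using True by auto
  next
    case False
    then have sp: "SM k > 0" using SMnn[of k] by simp
    have "0 \<le> Q k (t k / SM k)" by (rule Qnn)
    also have "\<dots> = SN k - (t k)^2 / SM k" unfolding Qeq[OF k] using sp
      by (simp add: power2_eq_square field_simps)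
    finally have "(t k)^2 / SM k \<le> SN k" by simp
    then have "(t k)^2 \<le> SN k * SM k" using sp by (simp add: divide_le_eq)
    then show ?thesis using tsq[OF k] by (simp add: mult.commute)
  qed
  have "(\<Sum>k\<in>K. SM k * SN k - p k * (real d * real d)) = 0"
    using sumD sumP by (simp add: sum_subtractf sum_distrib_right[symmetric])
  then have EQ: "SM k * SN k = p k * (real d * real d)" if k: "k \<in> K" for k
    using sum_nonneg_eq_0_iff[OF fin, of "\<lambda>k. SM k * SN k - p k * (real d * real d)"] CS k by auto
  show ?thesis
  proof (intro ballI impI)
    fix k assume k: "k \<in> K" and pk0: "p k \<noteq> 0"
    have pk: "p k > 0" using pk0 pnn[OF k] by simp
    have tp: "t k > 0" using pk d0 unfolding t_def by simp
    have sp: "SM k > 0" using SM0[OF k] tp SMnn[of k] by force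
    define c0 where "c0 = t k / SM k"
    have "Q k c0 = SN k - (t k)^2 / SM k" unfolding Qeq[OF k] c0_def using sp
      by (simp add: power2_eq_square field_simps)
    also have "\<dots> = 0" using EQ[OF k] tsq[OF k] sp by (simp add: field_simps)
    finally have Q0: "Q k c0 = 0" .
    have nm: "n k i j = complex_of_real c0 * cnj (m k i j)" if i: "i<d" and j: "j<d" for i j
    proof -
      have nn: "\<forall>x\<in>{..<d}. 0 \<le> (\<Sum>i<d. (cmod (cnj (n k i x) - complex_of_real c0 * m k i x))^2)"
        by (auto intro: sum_nonneg)
      have "(\<Sum>i<d. (cmod (cnj (n k i j) - complex_of_real c0 * m k i j))^2) = 0"
        using Q0 sum_nonneg_eq_0_iff[of "{..<d}" "\<lambda>j. \<Sum>i<d. (cmod (cnj (n k i j) - complex_of_real c0 * m k i j))^2"] j nn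
        unfolding Q_def by auto
      then have "(cmod (cnj (n k i j) - complex_of_real c0 * m k i j))^2 = 0"
        using sum_nonneg_eq_0_iff[of "{..<d}" "\<lambda>i. (cmod (cnj (n k i j) - complex_of_real c0 * m k i j))^2"] i
        by auto
      then have "cnj (n k i j) = complex_of_real c0 * m k i j" by simp
      then have "cnj (cnj (n k i j)) = cnj (complex_of_real c0 * m k i j)" by simp
      then show ?thesis by simp
    qed
    define lam where "lam = SM k / real d"
    have lp: "lam > 0" unfolding lam_def using sp d0 by simp
    have lc: "complex_of_real (sqrt (p k)) / complex_of_real c0 = complex_of_real lam"
      unfolding lam_def c0_def t_def using pk sp d0 by (simp add: field_simps)
    define \<alpha> where "\<alpha> = sqrt lam"
    have ap: "\<alpha> > 0" unfolding \<alpha>_def using lp by simp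
    have a2: "\<alpha> * \<alpha> = lam" unfolding \<alpha>_def using lp by simp
    define M where "M = op_matrix d a (E k) A"
    have Mc: "M \<in> carrier_mat d d" unfolding M_def op_matrix_def by simp
    have Mi: "M $$ (i,j) = m k i j" if "i<d" "j<d" for i j
      unfolding M_def op_matrix_def m_def using that by simp
    have MMa: "(\<Sum>j<d. m k i j * cnj (m k l j)) = complex_of_real lam * (if i = l then 1 else 0)"
      if i: "i<d" and l: "l<d" for i l
    proof -
      have "complex_of_real c0 * (\<Sum>j<d. m k i j * cnj (m k l j)) = (\<Sum>j<d. m k i j * n k l j)"
        by (simp add: sum_distrib_left nm[OF l] mult_ac)
      also have "\<dots> = complex_of_real (sqrt (p k)) * (if i = l then 1 else 0)" by (rule factA[OF k i l])
      finally have "complex_of_real c0 * (\<Sum>j<d. m k i j * cnj (m k l j)) = complex_of_real (sqrt (p k)) * (if i = l then 1 else 0)" .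
      moreover have "c0 \<noteq> 0" unfolding c0_def using tp sp by simp
      ultimately show ?thesis using lc by (simp add: field_simps)
    qed
    define U where "U = complex_of_real (1 / \<alpha>) \<cdot>\<^sub>m M"
    have Uc: "U \<in> carrier_mat d d" unfolding U_def using Mc by simp
    have Ui: "U $$ (i,j) = complex_of_real (1 / \<alpha>) * m k i j" if "i<d" "j<d" for i j
      unfolding U_def using Mc Mi[OF that] that by simp
    have UU: "U * mat_adjoint U = 1\<^sub>m d"
    proof (rule eq_matI)
      fix i l assume i: "i < dim_row (1\<^sub>m d)" and l: "l < dim_col (1\<^sub>m d)"
      then have i: "i<d" and l: "l<d" by auto
      have "(U * mat_adjoint U) $$ (i,l) = (\<Sum>j<d. U $$ (i,j) * mat_adjoint U $$ (j,l))"
        by (rule mat_mult_idx[OF Uc adj_carrier[OF Uc] i l])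
      also have "\<dots> = (\<Sum>j<d. complex_of_real (1 / (\<alpha> * \<alpha>)) * (m k i j * cnj (m k l j)))"
        using Uc i l by (intro sum.cong refl) (simp add: Ui)
      also have "\<dots> = complex_of_real (1 / (\<alpha> * \<alpha>)) * (complex_of_real lam * (if i = l then 1 else 0))"
        unfolding sum_distrib_left[symmetric] MMa[OF i l] ..
      also have "\<dots> = 1\<^sub>m d $$ (i,l)" using a2 lp i l by simp
      finally show "(U * mat_adjoint U) $$ (i,l) = 1\<^sub>m d $$ (i,l)" .
    qed (use Uc in auto)
    have "unitary_mat d U" unfolding unitary_mat_def
      using Uc UU mat_mult_left_right_inverse[OF Uc adj_carrier[OF Uc] UU] by simp
    moreover have "op_matrix d a (E k) A = complex_of_real \<alpha> \<cdot>\<^sub>m U"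
    proof (rule eq_matI)
      fix i j assume "i < dim_row (complex_of_real \<alpha> \<cdot>\<^sub>m U)" "j < dim_col (complex_of_real \<alpha> \<cdot>\<^sub>m U)"
      then have i: "i<d" and j: "j<d" using Uc by auto
      show "op_matrix d a (E k) A $$ (i,j) = (complex_of_real \<alpha> \<cdot>\<^sub>m U) $$ (i,j)"
        using Mi[OF i j] Ui[OF i j] Uc i j ap unfolding M_def by simp
    qed (use Uc in \<open>auto simp: op_matrix_def\<close>)
    moreover have "op_matrix d b (F k) B = complex_of_real (sqrt (p k) / \<alpha>) \<cdot>\<^sub>m map_mat cnj U"
    proof (rule eq_matI)
      fix i j assume "i < dim_row (complex_of_real (sqrt (p k) / \<alpha>) \<cdot>\<^sub>m map_mat cnj U)"
        "j < dim_col (complex_of_real (sqrt (p k) / \<alpha>) \<cdot>\<^sub>m map_mat cnj U)"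
      then have i: "i<d" and j: "j<d" using Uc by auto
      have "op_matrix d b (F k) B $$ (i,j) = n k i j" unfolding op_matrix_def n_def using i j by simp
      also have "\<dots> = complex_of_real c0 * cnj (m k i j)" by (rule nm[OF i j])
      also have "\<dots> = complex_of_real (sqrt (p k) / \<alpha>) * cnj (complex_of_real (1 / \<alpha>) * m k i j)"
      proof -
        have "complex_of_real c0 = complex_of_real (sqrt (p k)) / complex_of_real lam"
          using lc lp tp sp unfolding c0_def by (simp add: field_simps)
        then show ?thesis using a2 ap by (simp add: field_simps flip: of_real_mult)
      qed
      also have "\<dots> = (complex_of_real (sqrt (p k) / \<alpha>) \<cdot>\<^sub>m map_mat cnj U) $$ (i,j)"
        using Ui[OF i j] Uc i j by simp
      finally show "op_matrix d b (F k) B $$ (i,j) = (complex_of_real (sqrt (p k) / \<alpha>) \<cdot>\<^sub>m map_mat cnj U) $$ (i,j)" .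
    qed (use Uc in \<open>auto simp: op_matrix_def\<close>)
    ultimately show "\<exists>\<alpha>::real. \<alpha> > 0 \<and> (\<exists>U. unitary_mat d U \<and>
            op_matrix d a (E k) A = complex_of_real \<alpha> \<cdot>\<^sub>m U \<and>
            op_matrix d b (F k) B = complex_of_real (sqrt (p k) / \<alpha>) \<cdot>\<^sub>m map_mat cnj U)"
      using ap by blast
  qed
qed


theorem mainTheorem9:
  fixes nA nB d :: nat
    and A B a b :: "nat \<Rightarrow> complex vec"
    and K :: "'k set"
    and E F :: "'k \<Rightarrow> complex mat"
    and p :: "'k \<Rightarrow> real"
  assumes "nA \<ge> d" and "nB \<ge> d"
    and "orthonormal_family nA d A" and "orthonormal_family nB d B"
    and "orthonormal_family d d a" and "orthonormal_family d d b"
    and "finite K"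
    and "\<And>k. k \<in> K \<Longrightarrow> E k \<in> carrier_mat d nA"
    and "\<And>k. k \<in> K \<Longrightarrow> F k \<in> carrier_mat d nB"
    and "\<And>k. k \<in> K \<Longrightarrow> p k \<ge> 0"
    and "mat (nA * nB) (nA * nB) (\<lambda>(r, c). \<Sum>k\<in>K.
            kron (mat_adjoint (E k) * E k) (mat_adjoint (F k) * F k) $$ (r, c)) = 1\<^sub>m (nA * nB)"
    and "\<And>k. k \<in> K \<Longrightarrow> kron (E k) (F k) *\<^sub>v max_ent nA nB d A B
            = complex_of_real (sqrt (p k)) \<cdot>\<^sub>v max_ent d d d a b"
  shows "\<forall>k\<in>K. p k \<noteq> 0 \<longrightarrow> (\<exists>\<alpha>::real. \<alpha> > 0 \<and> (\<exists>U. unitary_mat d U \<and>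
            op_matrix d a (E k) A = complex_of_real \<alpha> \<cdot>\<^sub>m U \<and>
            op_matrix d b (F k) B = complex_of_real (sqrt (p k) / \<alpha>) \<cdot>\<^sub>m map_mat cnj U))"
    using assms by (rule main_aux)

end
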